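(* Let $F$ be a field with $\mathrm{char}\,F\ne2,3$ and let $\mathrm{Gr}_3$ be the Grassmann algebra over $F$ of a 3-dimensional vector space. Then $\mathrm{rb}(\mathrm{Gr}_3)=3$.
   Context: A linear operator $R$ on $A$ is a Rota–Baxter operator of weight $0$ if $R(x)R(y)=R(R(x)y+xR(y))$ for all $x,y\in A$. The RB-index $\mathrm{rb}(A)$ is the least $n\in\mathbb N$ such that $R^n=0$ for every Rota–Baxter operator $R$ of weight zero on $A$. *)

theory Defs
  imports Main
begin

text \<open>An element is represented by its
coefficient function on subsets of nat, vanishing outside Pow {0,1,2}.\<close>

definition gr3_carrier :: "(nat set \<Rightarrow> 'a::field) set" where
  "gr3_carrier = {x. \<forall>S. \<not> S \<subseteq> {0,1,2} \<longrightarrow> x S = 0}"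

text \<open>Sign of e_T * e_U (for disjoint T, U): (-1) to the number of inversions.\<close>
definition gsign :: "nat set \<Rightarrow> nat set \<Rightarrow> 'a::field" where
  "gsign T U = (-1) ^ card {(i, j). i \<in> T \<and> j \<in> U \<and> j < i}"

definition gr3_mult :: "(nat set \<Rightarrow> 'a::field) \<Rightarrow> (nat set \<Rightarrow> 'a) \<Rightarrow> (nat set \<Rightarrow> 'a)" where
  "gr3_mult x y = (\<lambda>S. if S \<subseteq> {0,1,2}
      then (\<Sum>T\<in>Pow S. gsign T (S - T) * x T * y (S - T)) else 0)"

definition gr3_linear :: "((nat set \<Rightarrow> 'a::field) \<Rightarrow> (nat set \<Rightarrow> 'a)) \<Rightarrow> bool" where
  "gr3_linear R \<longleftrightarrow>
     (\<forall>x\<in>gr3_carrier. R x \<in> gr3_carrier) \<and>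
     (\<forall>x\<in>gr3_carrier. \<forall>y\<in>gr3_carrier. R (\<lambda>S. x S + y S) = (\<lambda>S. R x S + R y S)) \<and>
     (\<forall>c::'a. \<forall>x\<in>gr3_carrier. R (\<lambda>S. c * x S) = (\<lambda>S. c * R x S))"

definition gr3_RB0 :: "((nat set \<Rightarrow> 'a::field) \<Rightarrow> (nat set \<Rightarrow> 'a)) \<Rightarrow> bool" where
  "gr3_RB0 R \<longleftrightarrow> gr3_linear R \<and>
     (\<forall>x\<in>gr3_carrier. \<forall>y\<in>gr3_carrier.
        gr3_mult (R x) (R y) = R (\<lambda>S. gr3_mult (R x) y S + gr3_mult x (R y) S))"

definition rb_gr3 :: "'a::field itself \<Rightarrow> nat" where
  "rb_gr3 _ = (LEAST n. \<forall>R :: (nat set \<Rightarrow> 'a) \<Rightarrow> (nat set \<Rightarrow> 'a).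
      gr3_RB0 R \<longrightarrow> (\<forall>x\<in>gr3_carrier. (R ^^ n) x = (\<lambda>S. 0)))"

end

theory Submission imports Defs begin

definition V :: "'a::field \<Rightarrow> 'a \<Rightarrow> 'a \<Rightarrow> 'a \<Rightarrow> 'a \<Rightarrow> 'a \<Rightarrow> 'a \<Rightarrow> 'a \<Rightarrow> nat set \<Rightarrow> 'a" where
  "V c0 c1 c2 c3 c4 c5 c6 c7 = (\<lambda>S. if S \<subseteq> {0,1,2} then
     (if 0 \<in> S then (if 1 \<in> S then (if 2 \<in> S then c7 else c4) else (if 2 \<in> S then c5 else c1))
      else (if 1 \<in> S then (if 2 \<in> S then c6 else c2) else (if 2 \<in> S then c3 else c0))) else 0)"

lemma filter_empty': "Set.filter P {} = {}" by auto
lemma filter_insert': "Set.filter P (insert x A) = (if P x then insert x (Set.filter P A) else Set.filter P A)"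
  by auto

lemma gsign_eq0: "finite T \<Longrightarrow> finite U \<Longrightarrow> gsign T U = (-1) ^ (\<Sum>i\<in>T. card (Set.filter (\<lambda>j. j < i) U))"
proof -
  assume fT: "finite T" and fU: "finite U"
  have "{(i, j). i \<in> T \<and> j \<in> U \<and> j < i} = (\<Union>i\<in>T. (\<lambda>j. (i,j)) ` Set.filter (\<lambda>j. j < i) U)"
    by auto
  moreover have "card (\<Union>i\<in>T. (\<lambda>j. (i,j)) ` Set.filter (\<lambda>j. j < i) U) = (\<Sum>i\<in>T. card ((\<lambda>j. (i,j)) ` Set.filter (\<lambda>j. j < i) U))"
    by (rule card_UN_disjoint) (use fT fU in auto)
  moreover have "\<And>i. card ((\<lambda>j. (i,j)) ` Set.filter (\<lambda>j. j < i) U) = card (Set.filter (\<lambda>j. j < i) U)"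
    by (rule card_image) (auto simp: inj_on_def)
  ultimately show ?thesis unfolding gsign_def by simp
qed

lemma sum_Pow_insert: "a \<notin> A \<Longrightarrow> finite A \<Longrightarrow> sum f (Pow (insert a A)) = sum f (Pow A) + sum (\<lambda>T. f (insert a T)) (Pow A)"
proof -
  assume a: "a \<notin> A" and f: "finite A"
  have "sum f (Pow (insert a A)) = sum f (Pow A \<union> insert a ` Pow A)" by (simp add: Pow_insert)
  also have "\<dots> = sum f (Pow A) + sum f (insert a ` Pow A)"
    by (rule sum.union_disjoint) (use a f in auto)
  also have "sum f (insert a ` Pow A) = sum (\<lambda>T. f (insert a T)) (Pow A)"
    by (subst sum.reindex) (use a in \<open>auto simp: inj_on_def\<close>)
  finally show ?thesis .
qed

lemma Pow3: "Pow {0::nat,1,2} = {{},{0},{1},{2},{0,1},{0,2},{1,2},{0,1,2}}"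
  by (simp add: Pow_insert insert_commute)
lemma sub3: "S \<subseteq> {0::nat,1,2} \<Longrightarrow> S = {} \<or> S = {0} \<or> S = {1} \<or> S = {2} \<or> S = {0,1} \<or> S = {0,2} \<or> S = {1,2} \<or> S = {0,1,2}"
  using Pow3 by blast

lemma card_filter_sum: "finite U \<Longrightarrow> card {j\<in>U. P j} = (\<Sum>j\<in>U. if P j then 1 else 0)"
proof (induct U rule: finite_induct)
  case (insert x F)
  have "{j \<in> insert x F. P j} = (if P x then insert x {j\<in>F. P j} else {j\<in>F. P j})" by auto
  then show ?case using insert by simp
qed simp
lemma gsign_eq: "finite T \<Longrightarrow> finite U \<Longrightarrow> gsign T U = (-1) ^ (\<Sum>i\<in>T. \<Sum>j\<in>U. if j < i then 1 else 0)"
  by (simp add: gsign_eq0 card_filter_sum)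
lemmas Vsimps = V_def gsign_eq filter_empty' filter_insert' sum_Pow_insert insert_Diff_if
lemma V_mult: "gr3_mult (V a0 a1 a2 a3 a4 a5 a6 a7) (V b0 b1 b2 b3 b4 b5 b6 b7) = V (a0*b0) (a0*b1 + a1*b0) (a0*b2 + a2*b0) (a0*b3 + a3*b0) (a0*b4 + a1*b2 - a2*b1 + a4*b0) (a0*b5 + a1*b3 - a3*b1 + a5*b0) (a0*b6 + a2*b3 - a3*b2 + a6*b0) (a0*b7 + a1*b6 - a2*b5 + a3*b4 + a4*b3 - a5*b2 + a6*b1 + a7*b0)"
proof
  fix S :: "nat set"
  show "gr3_mult (V a0 a1 a2 a3 a4 a5 a6 a7) (V b0 b1 b2 b3 b4 b5 b6 b7) S = V (a0*b0) (a0*b1 + a1*b0) (a0*b2 + a2*b0) (a0*b3 + a3*b0) (a0*b4 + a1*b2 - a2*b1 + a4*b0) (a0*b5 + a1*b3 - a3*b1 + a5*b0) (a0*b6 + a2*b3 - a3*b2 + a6*b0) (a0*b7 + a1*b6 - a2*b5 + a3*b4 + a4*b3 - a5*b2 + a6*b1 + a7*b0) S"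
  proof (cases "S \<subseteq> {0,1,2}")
    case False
    then show ?thesis unfolding gr3_mult_def V_def by auto
  next
    case True
    then show ?thesis using sub3[OF True]
      apply (elim disjE)
      apply (simp_all add: gr3_mult_def Vsimps)
      done
  qed
qed

definition vadd :: "(nat set \<Rightarrow> 'a::field) \<Rightarrow> (nat set \<Rightarrow> 'a) \<Rightarrow> (nat set \<Rightarrow> 'a)" where
  "vadd x y = (\<lambda>S. x S + y S)"
definition vsm :: "'a::field \<Rightarrow> (nat set \<Rightarrow> 'a) \<Rightarrow> (nat set \<Rightarrow> 'a)" where
  "vsm c x = (\<lambda>S. c * x S)"

lemma V_add: "vadd (V a0 a1 a2 a3 a4 a5 a6 a7) (V b0 b1 b2 b3 b4 b5 b6 b7) = V (a0+b0) (a1+b1) (a2+b2) (a3+b3) (a4+b4) (a5+b5) (a6+b6) (a7+b7)"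
  by (rule ext) (simp add: V_def vadd_def)
lemma V_sm: "vsm c (V a0 a1 a2 a3 a4 a5 a6 a7) = V (c*a0) (c*a1) (c*a2) (c*a3) (c*a4) (c*a5) (c*a6) (c*a7)"
  by (rule ext) (simp add: V_def vsm_def)
lemma V_eq: "(V a0 a1 a2 a3 a4 a5 a6 a7 = V b0 b1 b2 b3 b4 b5 b6 b7) \<longleftrightarrow> (a0=b0 \<and> a1=b1 \<and> a2=b2 \<and> a3=b3 \<and> a4=b4 \<and> a5=b5 \<and> a6=b6 \<and> a7=b7)"
proof
  assume h: "V a0 a1 a2 a3 a4 a5 a6 a7 = V b0 b1 b2 b3 b4 b5 b6 b7"
  have "\<And>S. V a0 a1 a2 a3 a4 a5 a6 a7 S = V b0 b1 b2 b3 b4 b5 b6 b7 S" using h by simp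
  from this[of "{}"] this[of "{0}"] this[of "{1}"] this[of "{2}"] this[of "{0,1}"] this[of "{0,2}"] this[of "{1,2}"] this[of "{0,1,2}"]
  show "a0=b0 \<and> a1=b1 \<and> a2=b2 \<and> a3=b3 \<and> a4=b4 \<and> a5=b5 \<and> a6=b6 \<and> a7=b7" by (simp_all add: V_def)
qed simp
lemma V_in: "V a0 a1 a2 a3 a4 a5 a6 a7 \<in> gr3_carrier"
  unfolding gr3_carrier_def V_def by auto
lemma carrier_V: "x \<in> gr3_carrier \<Longrightarrow> x = V (x {}) (x {0}) (x {1}) (x {2}) (x {0,1}) (x {0,2}) (x {1,2}) (x {0,1,2})"
proof (rule ext)
  fix S assume x: "x \<in> gr3_carrier"
  show "x S = V (x {}) (x {0}) (x {1}) (x {2}) (x {0,1}) (x {0,2}) (x {1,2}) (x {0,1,2}) S"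
  proof (cases "S \<subseteq> {0,1,2}")
    case True
    then show ?thesis using sub3[OF True] by (elim disjE) (simp_all add: V_def)
  next
    case False
    then show ?thesis using x unfolding gr3_carrier_def V_def by auto
  qed
qed
lemma V_zero: "(\<lambda>S. 0) = V 0 0 0 0 0 0 0 0"
  by (rule ext) (simp add: V_def)
lemma V_ex: "x \<in> gr3_carrier \<Longrightarrow> \<exists>c0 c1 c2 c3 c4 c5 c6 c7. x = V c0 c1 c2 c3 c4 c5 c6 c7"
  using carrier_V by blast
lemma V_cases:
  assumes "x \<in> gr3_carrier"
  obtains c0 c1 c2 c3 c4 c5 c6 c7 where "x = V c0 c1 c2 c3 c4 c5 c6 c7"
  using carrier_V[OF assms] by (rule that)
lemma V_ev: "V c0 c1 c2 c3 c4 c5 c6 c7 {} = c0"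
  by (simp add: V_def)

lemma mult_in: "x \<in> gr3_carrier \<Longrightarrow> y \<in> gr3_carrier \<Longrightarrow> gr3_mult x y \<in> gr3_carrier"
  using V_ex[of x] V_ex[of y] by (auto simp: V_mult V_in)
lemma add_in: "x \<in> gr3_carrier \<Longrightarrow> y \<in> gr3_carrier \<Longrightarrow> vadd x y \<in> gr3_carrier"
  using V_ex[of x] V_ex[of y] by (auto simp: V_add V_in)
lemma sm_in: "x \<in> gr3_carrier \<Longrightarrow> vsm c x \<in> gr3_carrier"
  using V_ex[of x] by (auto simp: V_sm V_in)

locale RBop =
  fixes R :: "(nat set \<Rightarrow> 'a::field) \<Rightarrow> (nat set \<Rightarrow> 'a)"
  assumes RB: "gr3_RB0 R"
begin
lemma Rin: "x \<in> gr3_carrier \<Longrightarrow> R x \<in> gr3_carrier"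
  using RB unfolding gr3_RB0_def gr3_linear_def by blast
lemma Radd: "x \<in> gr3_carrier \<Longrightarrow> y \<in> gr3_carrier \<Longrightarrow> R (vadd x y) = vadd (R x) (R y)"
  using RB unfolding gr3_RB0_def gr3_linear_def vadd_def by blast
lemma Rsm: "x \<in> gr3_carrier \<Longrightarrow> R (vsm c x) = vsm c (R x)"
  using RB unfolding gr3_RB0_def gr3_linear_def vsm_def by blast
lemma Rid: "x \<in> gr3_carrier \<Longrightarrow> y \<in> gr3_carrier \<Longrightarrow> gr3_mult (R x) (R y) = R (vadd (gr3_mult (R x) y) (gr3_mult x (R y)))"
  using RB unfolding gr3_RB0_def vadd_def by blast

lemma im_mult: "p \<in> R ` gr3_carrier \<Longrightarrow> q \<in> R ` gr3_carrier \<Longrightarrow> gr3_mult p q \<in> R ` gr3_carrier"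
proof -
  assume "p \<in> R ` gr3_carrier" "q \<in> R ` gr3_carrier"
  then obtain x y where x: "x \<in> gr3_carrier" "p = R x" and y: "y \<in> gr3_carrier" "q = R y" by blast
  have "vadd (gr3_mult (R x) y) (gr3_mult x (R y)) \<in> gr3_carrier"
    by (intro add_in mult_in Rin x y)
  then show ?thesis using Rid[OF x(1) y(1)] x y by (metis image_eqI)
qed
lemma im_add: "p \<in> R ` gr3_carrier \<Longrightarrow> q \<in> R ` gr3_carrier \<Longrightarrow> vadd p q \<in> R ` gr3_carrier"
proof -
  assume "p \<in> R ` gr3_carrier" "q \<in> R ` gr3_carrier"
  then obtain x y where x: "x \<in> gr3_carrier" "p = R x" and y: "y \<in> gr3_carrier" "q = R y" by blast
  show ?thesis using Radd[OF x(1) y(1)] add_in[OF x(1) y(1)] x y by (metis image_eqI)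
qed
lemma im_sm: "p \<in> R ` gr3_carrier \<Longrightarrow> vsm c p \<in> R ` gr3_carrier"
proof -
  assume "p \<in> R ` gr3_carrier"
  then obtain x where x: "x \<in> gr3_carrier" "p = R x" by blast
  show ?thesis using Rsm[OF x(1)] sm_in[OF x(1)] x by (metis image_eqI)
qed

lemma one_not_im: "V 1 0 0 0 0 0 0 0 \<notin> R ` gr3_carrier"
proof
  assume "V 1 0 0 0 0 0 0 0 \<in> R ` gr3_carrier"
  then obtain z where z0: "V 1 0 0 0 0 0 0 0 = R z" "z \<in> gr3_carrier" by (rule imageE)
  have z: "z \<in> gr3_carrier" "R z = V 1 0 0 0 0 0 0 0" using z0 by simp_all
  obtain c0 c1 c2 c3 c4 c5 c6 c7 where zc: "z = V c0 c1 c2 c3 c4 c5 c6 c7" using z(1) by (rule V_cases)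
  have e1: "gr3_mult (R z) (R z) = R (vadd (gr3_mult (R z) z) (gr3_mult z (R z)))" by (rule Rid[OF z(1) z(1)])
  have e2: "vadd (gr3_mult (R z) z) (gr3_mult z (R z)) = vadd z z"
    unfolding z(2) unfolding zc by (simp add: V_mult V_add)
  have e3: "R (vadd z z) = vadd (R z) (R z)" by (rule Radd[OF z(1) z(1)])
  have "V 1 0 0 0 0 0 0 0 = V (1+1) (0::'a) 0 0 0 0 0 0"
    using e1 unfolding e2 e3 unfolding z(2) V_add V_mult by simp
  then have "(1::'a) + 0 = 1 + 1" unfolding V_eq by simp
  then have "(0::'a) = 1" by (simp only: add_left_cancel)
  then show False by simp
qed

lemma im_N: assumes x: "x \<in> gr3_carrier" shows "R x {} = 0"
proof (rule ccontr)
  assume al: "R x {} \<noteq> 0"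
  obtain c0 c1 c2 c3 c4 c5 c6 c7 where u: "R x = V c0 c1 c2 c3 c4 c5 c6 c7" using Rin[OF x] by (rule V_cases)
  have c0: "c0 \<noteq> 0" using al u by (simp add: V_ev)
  define u where "u = R x"
  have uI: "u \<in> R ` gr3_carrier" using x u_def by blast
  define u2 where "u2 = gr3_mult u u"
  define u3 where "u3 = gr3_mult u2 u"
  define u4 where "u4 = gr3_mult u3 u"
  have "vadd (vadd (vadd u4 (vsm (-4*c0) u3)) (vsm (6*c0^2) u2)) (vsm (-4*c0^3) u) \<in> R ` gr3_carrier"
    unfolding u4_def u3_def u2_def by (intro im_add im_sm im_mult uI)
  moreover have "vadd (vadd (vadd u4 (vsm (-4*c0) u3)) (vsm (6*c0^2) u2)) (vsm (-4*c0^3) u) = V (- (c0^4)) 0 0 0 0 0 0 0"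
    unfolding u4_def u3_def u2_def u_def u V_mult V_add V_sm V_eq
    by (simp add: algebra_simps power2_eq_square power3_eq_cube power4_eq_xxxx)
  ultimately have "vsm (- 1 / c0^4) (V (- (c0^4)) 0 0 0 0 0 0 0) \<in> R ` gr3_carrier" by (metis im_sm)
  moreover have "vsm (- 1 / c0^4) (V (- (c0^4)) 0 0 0 0 0 0 0) = V 1 0 0 0 0 0 0 0"
    using c0 by (simp add: V_sm)
  ultimately show False using one_not_im by simp
qed


lemma RA:
  assumes two: "(2::'a) \<noteq> 0" and A: "R (V 1 0 0 0 0 0 0 0) = V 0 a1 a2 a3 a4 a5 a6 a7"
  shows "R (V 0 a1 a2 a3 a4 a5 a6 a7) = V 0 0 0 0 0 0 0 (a1*a6 - a2*a5 + a3*a4)"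
proof -
  have e: "gr3_mult (R (V 1 0 0 0 0 0 0 0)) (R (V 1 0 0 0 0 0 0 0)) = R (vadd (gr3_mult (R (V 1 0 0 0 0 0 0 0)) (V 1 0 0 0 0 0 0 0)) (gr3_mult (V 1 0 0 0 0 0 0 0) (R (V 1 0 0 0 0 0 0 0))))"
    by (rule Rid) (rule V_in)+
  have f: "vadd (gr3_mult (R (V 1 0 0 0 0 0 0 0)) (V 1 0 0 0 0 0 0 0)) (gr3_mult (V 1 0 0 0 0 0 0 0) (R (V 1 0 0 0 0 0 0 0))) = vsm 2 (V 0 a1 a2 a3 a4 a5 a6 a7)"
    unfolding A V_mult V_add V_sm V_eq by simp
  obtain r0 r1 r2 r3 r4 r5 r6 r7 where r: "R (V 0 a1 a2 a3 a4 a5 a6 a7) = V r0 r1 r2 r3 r4 r5 r6 r7"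
    using Rin[OF V_in] by (rule V_cases)
  have "gr3_mult (V 0 a1 a2 a3 a4 a5 a6 a7) (V 0 a1 a2 a3 a4 a5 a6 a7) = vsm 2 (V r0 r1 r2 r3 r4 r5 r6 r7)"
    using e unfolding f Rsm[OF V_in] unfolding A r .
  then have "0 = 2*r0 \<and> 0 = 2*r1 \<and> 0 = 2*r2 \<and> 0 = 2*r3 \<and> 0 = 2*r4 \<and> 0 = 2*r5 \<and> 0 = 2*r6 \<and> 2*(a1*a6 - a2*a5 + a3*a4) = 2*r7"
    unfolding V_mult V_sm V_eq by (simp add: algebra_simps)
  then show ?thesis unfolding r V_eq mult_left_cancel[OF two] using two by simp
qed


lemma solve_r:
  fixes r :: "'b::field"
  assumes h1: "A = r + p" and h2: "B = q + r" and h3: "p + q = C" and h4: "A + B - C = 0" and two: "(2::'b) \<noteq> 0"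
  shows "r = 0"
proof -
  have "A + B - C = 2 * r" unfolding h1 h2 h3[symmetric] by (simp add: algebra_simps)
  then show ?thesis using h4 two by simp
qed

lemma vadd_zero: "x \<in> gr3_carrier \<Longrightarrow> vadd x (V 0 0 0 0 0 0 0 0) = x"
  by (erule V_cases) (simp add: V_add)

lemma Rw:
  assumes A: "R (V 1 0 0 0 0 0 0 0) = V 0 a1 a2 a3 a4 a5 a6 a7"
  shows "R (V 0 0 0 0 0 0 0 1) = V 0 0 0 0 0 0 0 0"
proof -
  define w where "w = (V 0 0 0 0 0 0 0 1 :: nat set \<Rightarrow> 'a)"
  have w: "w \<in> gr3_carrier" unfolding w_def by (rule V_in)
  obtain b0 b1 b2 b3 b4 b5 b6 b7 where b: "R w = V b0 b1 b2 b3 b4 b5 b6 b7"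
    using Rin[OF w] by (rule V_cases)
  have b0: "b0 = 0" using im_N[OF w] unfolding b by (simp add: V_ev)
  have key: "gr3_mult (R w) (R y) = vsm s (R w)" if y: "y \<in> gr3_carrier" and hy: "gr3_mult (R w) y = vsm s w" for y s
  proof -
    obtain c0 c1 c2 c3 c4 c5 c6 c7 where c: "R y = V c0 c1 c2 c3 c4 c5 c6 c7" using Rin[OF y] by (rule V_cases)
    have c0: "c0 = 0" using im_N[OF y] unfolding c by (simp add: V_ev)
    have "gr3_mult w (R y) = V 0 0 0 0 0 0 0 0" unfolding w_def c c0 V_mult by simp
    then have "gr3_mult (R w) (R y) = R (vadd (gr3_mult (R w) y) (V 0 0 0 0 0 0 0 0))"
      using Rid[OF w y] by simp
    also have "\<dots> = R (gr3_mult (R w) y)" by (simp add: vadd_zero mult_in Rin w y)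
    also have "\<dots> = vsm s (R w)" unfolding hy by (rule Rsm[OF w])
    finally show ?thesis .
  qed
  have gen: "gr3_mult (V b0 b1 b2 b3 b4 b5 b6 b7) (V 0 c1 c2 c3 c4 c5 c6 c7) = vsm s (V b0 b1 b2 b3 b4 b5 b6 b7)"
    if y: "y \<in> gr3_carrier" and hy: "gr3_mult (V b0 b1 b2 b3 b4 b5 b6 b7) y = vsm s w"
      and c: "R y = V c0 c1 c2 c3 c4 c5 c6 c7" for y s c0 c1 c2 c3 c4 c5 c6 c7
  proof -
    have c0: "c0 = 0" using im_N[OF y] unfolding c by (simp add: V_ev)
    show ?thesis using key[OF y] hy unfolding b c c0 by simp
  qed
  obtain c0 c1 c2 c3 c4 c5 c6 c7 where c: "R (V 0 0 0 0 0 0 1 0) = V c0 c1 c2 c3 c4 c5 c6 c7" using Rin[OF V_in] by (rule V_cases)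
  have "b1 * b1 = 0"
    using gen[OF V_in _ c, of b1] unfolding w_def b0 V_mult V_sm V_eq by simp
  then have b1: "b1 = 0" by simp
  obtain c0 c1 c2 c3 c4 c5 c6 c7 where c: "R (V 0 0 0 0 0 1 0 0) = V c0 c1 c2 c3 c4 c5 c6 c7" using Rin[OF V_in] by (rule V_cases)
  have "b2 * b2 = 0"
    using gen[OF V_in _ c, of "-b2"] unfolding w_def b0 V_mult V_sm V_eq by simp
  then have b2: "b2 = 0" by simp
  obtain c0 c1 c2 c3 c4 c5 c6 c7 where c: "R (V 0 0 0 0 1 0 0 0) = V c0 c1 c2 c3 c4 c5 c6 c7" using Rin[OF V_in] by (rule V_cases)
  have "b3 * b3 = 0"
    using gen[OF V_in _ c, of "b3"] unfolding w_def b0 V_mult V_sm V_eq by simp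
  then have b3: "b3 = 0" by simp
  obtain c0 c1 c2 c3 c4 c5 c6 c7 where c: "R (V 0 0 0 1 0 0 0 0) = V c0 c1 c2 c3 c4 c5 c6 c7" using Rin[OF V_in] by (rule V_cases)
  have "b4 * b4 = 0"
    using gen[OF V_in _ c, of "b4"] unfolding w_def b0 b1 b2 b3 V_mult V_sm V_eq by simp
  then have b4: "b4 = 0" by simp
  obtain c0 c1 c2 c3 c4 c5 c6 c7 where c: "R (V 0 0 1 0 0 0 0 0) = V c0 c1 c2 c3 c4 c5 c6 c7" using Rin[OF V_in] by (rule V_cases)
  have "b5 * b5 = 0"
    using gen[OF V_in _ c, of "-b5"] unfolding w_def b0 b1 b2 b3 V_mult V_sm V_eq by simp
  then have b5: "b5 = 0" by simp
  obtain c0 c1 c2 c3 c4 c5 c6 c7 where c: "R (V 0 1 0 0 0 0 0 0) = V c0 c1 c2 c3 c4 c5 c6 c7" using Rin[OF V_in] by (rule V_cases)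
  have "b6 * b6 = 0"
    using gen[OF V_in _ c, of "b6"] unfolding w_def b0 b1 b2 b3 V_mult V_sm V_eq by simp
  then have b6: "b6 = 0" by simp
  have "b7 * b7 = 0"
    using gen[OF V_in _ A, of "b7"] unfolding w_def b0 b1 b2 b3 b4 b5 b6 V_mult V_sm V_eq by simp
  then have b7: "b7 = 0" by simp
  show ?thesis using b unfolding w_def b0 b1 b2 b3 b4 b5 b6 b7 .
qed


lemma R3:
  assumes two: "(2::'a) \<noteq> 0" and x: "x \<in> gr3_carrier"
  shows "R (R (R x)) = V 0 0 0 0 0 0 0 0"
proof -
  define one where "one = (V 1 0 0 0 0 0 0 0 :: nat set \<Rightarrow> 'a)"
  have one: "one \<in> gr3_carrier" unfolding one_def by (rule V_in)
  obtain a0 a1 a2 a3 a4 a5 a6 a7 where A0: "R one = V a0 a1 a2 a3 a4 a5 a6 a7"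
    using Rin[OF one] by (rule V_cases)
  have a0: "a0 = 0" using im_N[OF one] unfolding A0 by (simp add: V_ev)
  have A: "R one = V 0 a1 a2 a3 a4 a5 a6 a7" using A0 a0 by simp
  have RA: "R (V 0 a1 a2 a3 a4 a5 a6 a7) = V 0 0 0 0 0 0 0 (a1*a6 - a2*a5 + a3*a4)"
    by (rule RA[OF two A[unfolded one_def]])
  have Rw: "R (V 0 0 0 0 0 0 0 1) = V 0 0 0 0 0 0 0 0"
    by (rule Rw[OF A[unfolded one_def]])
  have Rsw: "R (vsm c (V 0 0 0 0 0 0 0 1)) = V 0 0 0 0 0 0 0 0" for c
  proof -
    have "R (vsm c (V 0 0 0 0 0 0 0 1)) = vsm c (R (V 0 0 0 0 0 0 0 1))" by (rule Rsm[OF V_in])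
    also have "\<dots> = V 0 0 0 0 0 0 0 0" unfolding Rw V_sm by simp
    finally show ?thesis .
  qed
  obtain x0 x1 x2 x3 x4 x5 x6 x7 where xc: "x = V x0 x1 x2 x3 x4 x5 x6 x7" using x by (rule V_cases)
  define u where "u = R x"
  have u: "u \<in> gr3_carrier" unfolding u_def by (rule Rin[OF x])
  obtain u0 u1 u2 u3 u4 u5 u6 u7 where uc0: "u = V u0 u1 u2 u3 u4 u5 u6 u7" using u by (rule V_cases)
  have "u0 = 0" using im_N[OF x] unfolding u_def[symmetric] uc0 by (simp add: V_ev)
  then have uc: "u = V 0 u1 u2 u3 u4 u5 u6 u7" using uc0 by simp
  have Ain: "V 0 a1 a2 a3 a4 a5 a6 a7 \<in> gr3_carrier" by (rule V_in)
  have "gr3_mult u (R (V 0 a1 a2 a3 a4 a5 a6 a7)) = R (vadd (gr3_mult u (V 0 a1 a2 a3 a4 a5 a6 a7)) (gr3_mult x (R (V 0 a1 a2 a3 a4 a5 a6 a7))))"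
    unfolding u_def by (rule Rid[OF x Ain])
  also have "gr3_mult x (R (V 0 a1 a2 a3 a4 a5 a6 a7)) = vsm (x0*(a1*a6 - a2*a5 + a3*a4)) (V 0 0 0 0 0 0 0 1)"
    unfolding RA xc V_mult V_sm V_eq by simp
  also have "R (vadd (gr3_mult u (V 0 a1 a2 a3 a4 a5 a6 a7)) (vsm (x0*(a1*a6 - a2*a5 + a3*a4)) (V 0 0 0 0 0 0 0 1)))
     = vadd (R (gr3_mult u (V 0 a1 a2 a3 a4 a5 a6 a7))) (V 0 0 0 0 0 0 0 0)"
    by (simp add: Radd mult_in u Ain sm_in V_in Rsw)
  also have "\<dots> = R (gr3_mult u (V 0 a1 a2 a3 a4 a5 a6 a7))"
    by (rule vadd_zero[OF Rin[OF mult_in[OF u Ain]]])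
  finally have iii: "R (gr3_mult u (V 0 a1 a2 a3 a4 a5 a6 a7)) = gr3_mult u (R (V 0 a1 a2 a3 a4 a5 a6 a7))" ..
  have iii': "R (gr3_mult u (V 0 a1 a2 a3 a4 a5 a6 a7)) = V 0 0 0 0 0 0 0 0"
  proof -
    have iii2: "gr3_mult u (R (V 0 a1 a2 a3 a4 a5 a6 a7)) = V 0 0 0 0 0 0 0 0" unfolding RA uc V_mult by simp
    show ?thesis by (rule trans[OF iii iii2])
  qed
  have "gr3_mult (R u) (R one) = R (vadd (gr3_mult (R u) one) (gr3_mult u (R one)))"
    by (rule Rid[OF u one])
  also have "gr3_mult (R u) one = R u"
    using Rin[OF u] by (rule V_cases) (simp add: one_def V_mult)
  also have "R (vadd (R u) (gr3_mult u (R one))) = vadd (R (R u)) (R (gr3_mult u (R one)))"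
    by (rule Radd[OF Rin[OF u] mult_in[OF u Rin[OF one]]])
  also have "R (gr3_mult u (R one)) = V 0 0 0 0 0 0 0 0" unfolding A by (rule iii')
  also have "vadd (R (R u)) (V 0 0 0 0 0 0 0 0) = R (R u)" by (rule vadd_zero[OF Rin[OF Rin[OF u]]])
  finally have iv: "R (R u) = gr3_mult (R u) (V 0 a1 a2 a3 a4 a5 a6 a7)" unfolding A ..
  have "gr3_mult u (R one) = R (vadd (gr3_mult (R x) one) (gr3_mult x (R one)))"
    unfolding u_def by (rule Rid[OF x one])
  also have "gr3_mult (R x) one = u" unfolding u_def[symmetric] uc one_def V_mult by simp
  also have "R (vadd u (gr3_mult x (R one))) = vadd (R u) (R (gr3_mult x (R one)))"
    by (rule Radd[OF u mult_in[OF x Rin[OF one]]])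
  finally have v: "gr3_mult u (V 0 a1 a2 a3 a4 a5 a6 a7) = vadd (R u) (R (gr3_mult x (V 0 a1 a2 a3 a4 a5 a6 a7)))"
    unfolding A .
  have "gr3_mult (R one) u = R (vadd (gr3_mult (R one) x) (gr3_mult one (R x)))"
    unfolding u_def by (rule Rid[OF one x])
  also have "gr3_mult one (R x) = u" unfolding u_def[symmetric] uc one_def V_mult by simp
  also have "R (vadd (gr3_mult (R one) x) u) = vadd (R (gr3_mult (R one) x)) (R u)"
    by (rule Radd[OF mult_in[OF Rin[OF one] x] u])
  finally have ii: "gr3_mult (V 0 a1 a2 a3 a4 a5 a6 a7) u = vadd (R (gr3_mult (V 0 a1 a2 a3 a4 a5 a6 a7) x)) (R u)"
    unfolding A .
  define s where "s = 2*(x1*a6 - x2*a5 + x3*a4 + x4*a3 - x5*a2 + x6*a1)"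
  have "vadd (gr3_mult x (V 0 a1 a2 a3 a4 a5 a6 a7)) (gr3_mult (V 0 a1 a2 a3 a4 a5 a6 a7) x)
      = vadd (vsm (2*x0) (V 0 a1 a2 a3 a4 a5 a6 a7)) (vsm s (V 0 0 0 0 0 0 0 1))"
    unfolding xc s_def V_mult V_add V_sm V_eq by (simp add: algebra_simps)
  then have "vadd (R (gr3_mult x (V 0 a1 a2 a3 a4 a5 a6 a7))) (R (gr3_mult (V 0 a1 a2 a3 a4 a5 a6 a7) x))
      = vadd (vsm (2*x0) (V 0 0 0 0 0 0 0 (a1*a6 - a2*a5 + a3*a4))) (V 0 0 0 0 0 0 0 0)"
    by (metis Radd Rsm Rsw RA mult_in x Ain sm_in V_in)
  note sum = this
  obtain p0 p1 p2 p3 p4 p5 p6 p7 where P: "R (gr3_mult x (V 0 a1 a2 a3 a4 a5 a6 a7)) = V p0 p1 p2 p3 p4 p5 p6 p7"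
    using Rin[OF mult_in[OF x Ain]] by (rule V_cases)
  obtain q0 q1 q2 q3 q4 q5 q6 q7 where Q: "R (gr3_mult (V 0 a1 a2 a3 a4 a5 a6 a7) x) = V q0 q1 q2 q3 q4 q5 q6 q7"
    using Rin[OF mult_in[OF Ain x]] by (rule V_cases)
  obtain r0 r1 r2 r3 r4 r5 r6 r7 where Ru: "R u = V r0 r1 r2 r3 r4 r5 r6 r7"
    using Rin[OF u] by (rule V_cases)
  have E1: "V 0 0 0 0 (u1*a2 - u2*a1) (u1*a3 - u3*a1) (u2*a3 - u3*a2) (u1*a6 - u2*a5 + u3*a4 + u4*a3 - u5*a2 + u6*a1) = V (r0+p0) (r1+p1) (r2+p2) (r3+p3) (r4+p4) (r5+p5) (r6+p6) (r7+p7)"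
    using v unfolding P Ru unfolding uc V_mult V_add by simp
  have E2: "V 0 0 0 0 (a1*u2 - a2*u1) (a1*u3 - a3*u1) (a2*u3 - a3*u2) (a1*u6 - a2*u5 + a3*u4 + a4*u3 - a5*u2 + a6*u1) = V (q0+r0) (q1+r1) (q2+r2) (q3+r3) (q4+r4) (q5+r5) (q6+r6) (q7+r7)"
    using ii unfolding Q Ru unfolding uc V_mult V_add by simp
  have E3: "V (p0+q0) (p1+q1) (p2+q2) (p3+q3) (p4+q4) (p5+q5) (p6+q6) (p7+q7) = V 0 0 0 0 0 0 0 (2*x0*(a1*a6 - a2*a5 + a3*a4))"
    using sum unfolding P Q V_add V_sm by simp
  have e1: "0 = r1+p1" "0 = r2+p2" "0 = r3+p3" "u1*a2 - u2*a1 = r4+p4" "u1*a3 - u3*a1 = r5+p5" "u2*a3 - u3*a2 = r6+p6"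
    using E1 unfolding V_eq by simp_all
  have e2: "0 = q1+r1" "0 = q2+r2" "0 = q3+r3" "a1*u2 - a2*u1 = q4+r4" "a1*u3 - a3*u1 = q5+r5" "a2*u3 - a3*u2 = q6+r6"
    using E2 unfolding V_eq by simp_all
  have e3: "p1+q1 = 0" "p2+q2 = 0" "p3+q3 = 0" "p4+q4 = 0" "p5+q5 = 0" "p6+q6 = 0"
    using E3 unfolding V_eq by simp_all
  have "r1 = 0" by (rule solve_r[OF e1(1) e2(1) e3(1) _ two]) simp
  moreover have "r2 = 0" by (rule solve_r[OF e1(2) e2(2) e3(2) _ two]) simp
  moreover have "r3 = 0" by (rule solve_r[OF e1(3) e2(3) e3(3) _ two]) simp
  moreover have "r4 = 0" by (rule solve_r[OF e1(4) e2(4) e3(4) _ two]) (simp add: algebra_simps)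
  moreover have "r5 = 0" by (rule solve_r[OF e1(5) e2(5) e3(5) _ two]) (simp add: algebra_simps)
  moreover have "r6 = 0" by (rule solve_r[OF e1(6) e2(6) e3(6) _ two]) (simp add: algebra_simps)
  ultimately have "r1 = 0 \<and> r2 = 0 \<and> r3 = 0 \<and> r4 = 0 \<and> r5 = 0 \<and> r6 = 0" by simp
  moreover have "r0 = 0" using im_N[OF u] unfolding Ru by (simp add: V_ev)
  ultimately show ?thesis unfolding u_def[symmetric] unfolding iv unfolding Ru V_mult by simp
qed

end

definition R0 :: "(nat set \<Rightarrow> 'a::field) \<Rightarrow> (nat set \<Rightarrow> 'a)" where
  "R0 x = V 0 (x {}) 0 0 0 0 (x {}) (x {0})"

lemma V_at: "V c0 c1 c2 c3 c4 c5 c6 c7 {} = c0" "V c0 c1 c2 c3 c4 c5 c6 c7 {0} = c1"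
  by (simp_all add: V_def)

lemma R0_V: "R0 (V c0 c1 c2 c3 c4 c5 c6 c7) = V 0 c0 0 0 0 0 c0 c1"
  unfolding R0_def V_at ..

lemma lam_add: "(\<lambda>S. x S + y S) = vadd x y" by (simp add: vadd_def)
lemma lam_sm: "(\<lambda>S. c * x S) = vsm c x" by (simp add: vsm_def)

lemma R0_in: "R0 x \<in> gr3_carrier" unfolding R0_def by (rule V_in)
lemma R0_add: assumes x: "x \<in> gr3_carrier" and y: "y \<in> gr3_carrier"
  shows "R0 (vadd x y) = vadd (R0 x) (R0 y)"
proof -
  obtain x0 x1 x2 x3 x4 x5 x6 x7 where xc: "x = V x0 x1 x2 x3 x4 x5 x6 x7" using x by (rule V_cases)
  obtain y0 y1 y2 y3 y4 y5 y6 y7 where yc: "y = V y0 y1 y2 y3 y4 y5 y6 y7" using y by (rule V_cases)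
  show ?thesis unfolding xc yc V_add R0_V by simp
qed
lemma R0_id: assumes x: "x \<in> gr3_carrier" and y: "y \<in> gr3_carrier"
  shows "gr3_mult (R0 x) (R0 y) = R0 (vadd (gr3_mult (R0 x) y) (gr3_mult x (R0 y)))"
proof -
  obtain x0 x1 x2 x3 x4 x5 x6 x7 where xc: "x = V x0 x1 x2 x3 x4 x5 x6 x7" using x by (rule V_cases)
  obtain y0 y1 y2 y3 y4 y5 y6 y7 where yc: "y = V y0 y1 y2 y3 y4 y5 y6 y7" using y by (rule V_cases)
  show ?thesis unfolding xc yc R0_V V_mult V_add R0_V V_eq by (simp add: algebra_simps)
qed
lemma R0_sm: assumes x: "x \<in> gr3_carrier" shows "R0 (vsm c x) = vsm c (R0 x)"
proof -
  obtain x0 x1 x2 x3 x4 x5 x6 x7 where xc: "x = V x0 x1 x2 x3 x4 x5 x6 x7" using x by (rule V_cases)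
  show ?thesis unfolding xc V_sm R0_V by simp
qed
lemma R0_RB: "gr3_RB0 (R0 :: (nat set \<Rightarrow> 'a::field) \<Rightarrow> _)"
  unfolding gr3_RB0_def gr3_linear_def lam_add lam_sm using R0_in R0_add R0_sm R0_id by blast

theorem corollary12:
  assumes "(2::'a::field) \<noteq> 0" and "(3::'a) \<noteq> 0"
  shows "rb_gr3 TYPE('a) = 3"
  unfolding rb_gr3_def
proof (rule Least_equality)
  show "\<forall>R :: (nat set \<Rightarrow> 'a) \<Rightarrow> (nat set \<Rightarrow> 'a). gr3_RB0 R \<longrightarrow> (\<forall>x\<in>gr3_carrier. (R ^^ 3) x = (\<lambda>S. 0))"
  proof (intro allI impI ballI)
    fix R :: "(nat set \<Rightarrow> 'a) \<Rightarrow> (nat set \<Rightarrow> 'a)" and x :: "nat set \<Rightarrow> 'a"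
    assume "gr3_RB0 R" and x: "x \<in> gr3_carrier"
    then interpret RBop R by unfold_locales
    have "(R ^^ 3) x = R (R (R x))" by (simp add: numeral_3_eq_3)
    also have "\<dots> = V 0 0 0 0 0 0 0 0" by (rule R3[OF assms(1) x])
    finally show "(R ^^ 3) x = (\<lambda>S. 0)" unfolding V_zero .
  qed
next
  fix m assume h: "\<forall>R :: (nat set \<Rightarrow> 'a) \<Rightarrow> (nat set \<Rightarrow> 'a). gr3_RB0 R \<longrightarrow> (\<forall>x\<in>gr3_carrier. (R ^^ m) x = (\<lambda>S. 0))"
  have m: "(R0 ^^ m) (V 1 0 0 0 0 0 0 0 :: nat set \<Rightarrow> 'a) = (\<lambda>S. 0)"
    using h R0_RB V_in by blast
  show "3 \<le> m"
  proof (rule ccontr)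
    assume "\<not> 3 \<le> m"
    then have "m = 0 \<or> m = 1 \<or> m = 2" by auto
    then show False
    proof (elim disjE)
      assume "m = 0"
      then have "V 1 0 0 0 0 0 0 0 = V (0::'a) 0 0 0 0 0 0 0" using m unfolding V_zero by simp
      then show False unfolding V_eq by simp
    next
      assume "m = 1"
      then have "V 0 1 0 0 0 0 1 0 = V (0::'a) 0 0 0 0 0 0 0" using m unfolding V_zero by (simp add: R0_V)
      then show False unfolding V_eq by simp
    next
      assume "m = 2"
      then have "V 0 0 0 0 0 0 0 1 = V (0::'a) 0 0 0 0 0 0 0" using m unfolding V_zero by (simp add: R0_V numeral_2_eq_2)
      then show False unfolding V_eq by simp
    qed
  qed
qed

end
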